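(* Let $R$ be a commutative Bezout domain. The following are equivalent: (1) $R$ has stable range 1.5; (2) $GL_2(R)=\mathbf G_\Phi\, U_2^{lw}(R)\,U_2^{up}(R)$ for every nonsingular $2\times2$ $d$-matrix $\Phi$; (3) $GL_n(R)=\mathbf G_\Phi\, U_n^{lw}(R)\,U_n^{up}(R)$ for every $n\ge2$ and every nonsingular $n\times n$ $d$-matrix $\Phi$.
   Context: A commutative Bezout domain is a commutative integral domain with $1\ne0$ in which every finitely generated ideal is principal. It has stable range 1.5 if for all $a,b\in R$ and $c\in R\setminus\{0\}$ with $(a,b,c)=1$ there is $r\in R$ with $(a+br,c)=1$. A $d$-matrix is a diagonal matrix $\mathrm{diag}(\varphi_1,\dots,\varphi_n)$ with $\varphi_i\mid\varphi_{i+1}$. $\mathbf G_\Phi=\{H\in GL_n(R):\ \exists K\in GL_n(R),\ H\Phi=\Phi K\}$. $U_n^{lw}(R)$ and $U_n^{up}(R)$ denote the groups of lower and upper unitriangular $n\times n$ matrices (triangular with $1$'s on the diagonal). For sets of matrices, $XYZ=\{xyz: x\in X,y\in Y,z\in Z\}$. *)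

theory Defs
  imports "Jordan_Normal_Form.Determinant"
begin

definition gen_ideal :: "'a::comm_ring_1 set \<Rightarrow> 'a set" where
  "gen_ideal S = {x. \<exists>f. x = (\<Sum>s\<in>S. f s * s)}"

definition bezout_domain :: "'a::idom itself \<Rightarrow> bool" where
  "bezout_domain _ \<longleftrightarrow> (\<forall>S::'a set. finite S \<longrightarrow> (\<exists>d. gen_ideal S = gen_ideal {d}))"

definition stable_range_15 :: "'a::idom itself \<Rightarrow> bool" where
  "stable_range_15 _ \<longleftrightarrow> (\<forall>a b c::'a. c \<noteq> 0 \<longrightarrow> gen_ideal {a, b, c} = UNIV \<longrightarrow>
      (\<exists>r. gen_ideal {a + b * r, c} = UNIV))"

definition GL :: "nat \<Rightarrow> 'a::comm_ring_1 mat set" where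
  "GL n = {A. A \<in> carrier_mat n n \<and> invertible_mat A}"

definition G_Phi :: "nat \<Rightarrow> 'a::comm_ring_1 mat \<Rightarrow> 'a mat set" where
  "G_Phi n \<Phi> = {H. H \<in> GL n \<and> (\<exists>K\<in>GL n. H * \<Phi> = \<Phi> * K)}"

definition U_lw :: "nat \<Rightarrow> 'a::comm_ring_1 mat set" where
  "U_lw n = {A. A \<in> carrier_mat n n \<and> (\<forall>i<n. A $$ (i, i) = 1) \<and>
      (\<forall>i<n. \<forall>j<n. i < j \<longrightarrow> A $$ (i, j) = 0)}"

definition U_up :: "nat \<Rightarrow> 'a::comm_ring_1 mat set" where
  "U_up n = {A. A \<in> carrier_mat n n \<and> (\<forall>i<n. A $$ (i, i) = 1) \<and>
      (\<forall>i<n. \<forall>j<n. j < i \<longrightarrow> A $$ (i, j) = 0)}"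

definition d_matrix :: "nat \<Rightarrow> 'a::comm_ring_1 mat \<Rightarrow> bool" where
  "d_matrix n \<Phi> \<longleftrightarrow> \<Phi> \<in> carrier_mat n n \<and>
      (\<forall>i<n. \<forall>j<n. i \<noteq> j \<longrightarrow> \<Phi> $$ (i, j) = 0) \<and>
      (\<forall>i. i + 1 < n \<longrightarrow> \<Phi> $$ (i, i) dvd \<Phi> $$ (i + 1, i + 1))"

definition set_prod3 :: "'a::comm_ring_1 mat set \<Rightarrow> 'a mat set \<Rightarrow> 'a mat set \<Rightarrow> 'a mat set" where
  "set_prod3 X Y Z = {x * y * z | x y z. x \<in> X \<and> y \<in> Y \<and> z \<in> Z}"

end

theory Submission
  imports Defs
begin

lemma gen_ideal_empty: "gen_ideal ({}::'a::comm_ring_1 set) = {0}"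
  unfolding gen_ideal_def by auto

lemma gen_ideal_insert:
  assumes fin: "finite S"
  shows "gen_ideal (insert (a::'a::comm_ring_1) S) = {x*a + y | x y. y \<in> gen_ideal S}"
proof (intro equalityI subsetI)
  fix z assume "z \<in> gen_ideal (insert a S)"
  then obtain f where z: "z = (\<Sum>s\<in>insert a S. f s * s)" unfolding gen_ideal_def by auto
  show "z \<in> {x*a + y | x y. y \<in> gen_ideal S}"
  proof (cases "a \<in> S")
    case True
    then have "z = 0 * a + (\<Sum>s\<in>S. f s * s)" using z by (simp add: insert_absorb)
    then show ?thesis unfolding gen_ideal_def by blast
  next
    case False
    then have "z = f a * a + (\<Sum>s\<in>S. f s * s)" using z fin by simp
    then show ?thesis unfolding gen_ideal_def by blast
  qed
next
  fix z assume "z \<in> {x*a + y | x y. y \<in> gen_ideal S}"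
  then obtain x g where z: "z = x*a + (\<Sum>s\<in>S. g s * s)" unfolding gen_ideal_def by auto
  show "z \<in> gen_ideal (insert a S)"
  proof (cases "a \<in> S")
    case True
    define f where "f = (\<lambda>s. g s + (if s = a then x else 0))"
    have "(\<Sum>s\<in>S. f s * s) = (\<Sum>s\<in>S. g s * s) + (\<Sum>s\<in>S. (if s = a then x else 0) * s)"
      unfolding f_def by (simp add: distrib_right sum.distrib)
    also have "(\<Sum>s\<in>S. (if s = a then x else 0) * s) = (\<Sum>s\<in>S. if s = a then x*a else 0)"
      by (rule sum.cong) auto
    also have "\<dots> = x * a" using True fin by simp
    finally have c1: "(\<Sum>s\<in>S. f s * s) = (\<Sum>s\<in>S. g s * s) + x * a" .
    have c2: "insert a S = S" using True by (rule insert_absorb)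
    have "z = (\<Sum>s\<in>insert a S. f s * s)" unfolding c2 c1 z by (rule add.commute)
    then have "\<exists>f. z = (\<Sum>s\<in>insert a S. f s * s)" by (rule exI[of _ f])
    then show ?thesis unfolding gen_ideal_def by simp
  next
    case False
    define f where "f = g(a := x)"
    have q1: "(\<Sum>s\<in>S. f s * s) = (\<Sum>s\<in>S. g s * s)"
      unfolding f_def using False by (intro sum.cong) auto
    have q2: "(\<Sum>s\<in>insert a S. f s * s) = f a * a + (\<Sum>s\<in>S. f s * s)" using False fin by simp
    have q3: "f a = x" by (simp add: f_def)
    have "z = (\<Sum>s\<in>insert a S. f s * s)" by (simp only: q1 q2 q3 z)
    then have "\<exists>f. z = (\<Sum>s\<in>insert a S. f s * s)" by (rule exI[of _ f])
    then show ?thesis unfolding gen_ideal_def by simp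
  qed
qed

lemma gen_ideal2: "gen_ideal {a::'a::comm_ring_1, b} = {x*a + y*b | x y. True}"
  by (auto simp: gen_ideal_insert gen_ideal_empty)

lemma gen_ideal3: "gen_ideal {a::'a::comm_ring_1, b, c} = {x*a + (y*b + z*c) | x y z. True}"
proof -
  have "gen_ideal {a,b,c} = {x*a + y | x y. y \<in> gen_ideal {b,c}}" by (rule gen_ideal_insert) simp
  also have "\<dots> = {x*a + y | x y. y \<in> {x*b + y*c | x y. True}}" by (simp only: gen_ideal2)
  also have "\<dots> = {x*a + (y*b + z*c) | x y z. True}" by blast
  finally show ?thesis .
qed

lemma gen_ideal1: "gen_ideal {a::'a::comm_ring_1} = {x*a | x. True}"
  by (auto simp: gen_ideal_insert gen_ideal_empty)

definition cop :: "'a::comm_ring_1 \<Rightarrow> 'a \<Rightarrow> bool" where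
  "cop a c \<longleftrightarrow> (\<exists>x y. x*a + y*c = 1)"

lemma cop_iff: "gen_ideal {a, c} = UNIV \<longleftrightarrow> cop a c"
proof
  assume "gen_ideal {a, c} = UNIV"
  then have "1 \<in> gen_ideal {a,c}" by simp
  then obtain x y where "1 = x*a + y*c" unfolding gen_ideal2 by blast
  then show "cop a c" unfolding cop_def by metis
next
  assume "cop a c"
  then obtain x y where e: "x*a + y*c = 1" unfolding cop_def by auto
  show "gen_ideal {a, c} = UNIV" unfolding gen_ideal2
  proof (intro equalityI subsetI)
    fix t :: 'a
    have "t = (t*x)*a + (t*y)*c" using arg_cong[OF e, of "\<lambda>s. t*s"] by (simp add: algebra_simps)
    then show "t \<in> {x*a + y*c | x y. True}" by blast
  qed simp
qed

lemma three_iff: "gen_ideal {a, b, c} = UNIV \<longleftrightarrow> (\<exists>x y z. x*a + y*b + z*c = (1::'a::comm_ring_1))"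
proof
  assume "gen_ideal {a, b, c} = UNIV"
  then have "1 \<in> gen_ideal {a,b,c}" by simp
  then obtain x y z where "1 = x*a + (y*b + z*c)" unfolding gen_ideal3 by blast
  then show "\<exists>x y z. x*a + y*b + z*c = 1" by (metis add.assoc)
next
  assume "\<exists>x y z. x*a + y*b + z*c = 1"
  then obtain x y w where e: "x*a + y*b + w*c = 1" by auto
  show "gen_ideal {a, b, c} = UNIV" unfolding gen_ideal3
  proof (intro equalityI subsetI)
    fix t :: 'a
    have "t = (t*x)*a + ((t*y)*b + (t*w)*c)" using arg_cong[OF e, of "\<lambda>s. t*s"] by (simp add: algebra_simps)
    then show "t \<in> {x*a + (y*b + z*c) | x y z. True}" by blast
  qed simp
qed

lemma cop_mult: "cop a c \<Longrightarrow> cop b c \<Longrightarrow> cop (a*b) c"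
  unfolding cop_def
proof (elim exE)
  fix x y x' y' assume e1: "x*a + y*c = 1" and e2: "x'*b + y'*c = 1"
  have "(x*a + y*c) * (x'*b + y'*c) = 1" using e1 e2 by simp
  then have "(x*x')*(a*b) + (x*a*y' + y*x'*b + y*y'*c)*c = 1" by (simp add: algebra_simps)
  then show "\<exists>x y. x * (a * b) + y * c = 1" by blast
qed

lemma bezout_pair:
  assumes "bezout_domain TYPE('a::idom)"
  shows "\<exists>d x y g h. d = x*p + y*q \<and> p = g*d \<and> q = h*(d::'a)"
proof -
  have "finite {p,q}" by simp
  then obtain d where "gen_ideal {p, q} = gen_ideal {d::'a}" using assms unfolding bezout_domain_def by blast
  then have e: "{x*p + y*q | x y. True} = {x*d | x. True}" by (simp only: gen_ideal2 gen_ideal1)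
  have "d = 1 * d" by simp
  then have "d \<in> {x*d | x. True}" by blast
  then have "d \<in> {x*p + y*q | x y. True}" by (simp only: e)
  then obtain x y where d1: "d = x*p + y*q" by blast
  have "p = 1*p + 0*q" by simp
  then have "p \<in> {x*p + y*q | x y. True}" by blast
  then have "p \<in> {x*d | x. True}" by (simp only: e)
  then obtain g where d2: "p = g*d" by blast
  have "q = 0*p + 1*q" by simp
  then have "q \<in> {x*p + y*q | x y. True}" by blast
  then have "q \<in> {x*d | x. True}" by (simp only: e)
  then obtain h where d3: "q = h*d" by blast
  show ?thesis using d1 d2 d3 by blast
qed

lemma bezout_vec:
  fixes m :: nat
  assumes "bezout_domain TYPE('a::idom)"
  shows "\<exists>d w g. d = (\<Sum>j<m. w j * x j) \<and> (\<forall>j<m. x j = g j * (d::'a))"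
proof (induction m)
  case 0
  show ?case by (rule exI[of _ 0]) simp
next
  case (Suc m)
  then obtain d w g where d: "d = (\<Sum>j<m. w j * x j)" and g: "\<forall>j<m. x j = g j * d" by blast
  obtain e a b p q where e: "e = a*d + b*x m" "d = p*e" "x m = q*e" using bezout_pair[OF assms] by blast
  define w' where "w' = (\<lambda>j. if j < m then a * w j else b)"
  define g' where "g' = (\<lambda>j. if j < m then g j * p else q)"
  have s1: "(\<Sum>j<m. w' j * x j) = (\<Sum>j<m. a * w j * x j)"
    by (rule sum.cong) (auto simp: w'_def)
  have s2: "(\<Sum>j<m. a * w j * x j) = a * d"
    unfolding d by (simp add: sum_distrib_left mult.assoc)
  have "(\<Sum>j<Suc m. w' j * x j) = (\<Sum>j<m. w' j * x j) + b * x m"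
    by (simp add: w'_def)
  then have E: "e = (\<Sum>j<Suc m. w' j * x j)" using s1 s2 e(1) by (simp add: w'_def)
  have G: "\<forall>j<Suc m. x j = g' j * e"
    unfolding g'_def proof (intro allI impI)
    fix j assume "j < Suc m"
    then show "x j = (if j < m then g j * p else q) * e"
    proof (cases "j < m")
      case True
      then have "x j = g j * d" using g by blast
      then show ?thesis using True e(2) by (simp add: mult.assoc)
    next
      case False
      then have "j = m" using \<open>j < Suc m\<close> by simp
      then show ?thesis using e(3) by simp
    qed
  qed
  show ?case by (rule exI[of _ e], rule exI[of _ w'], rule exI[of _ g'], rule conjI, rule E, rule G)
qed

lemma mult_entry:
  assumes "A \<in> carrier_mat n m" "B \<in> carrier_mat m k" "i < n" "j < k"
  shows "(A*B)$$(i,j) = (\<Sum>l<m. A$$(i,l) * B$$(l,j))"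
  using assms by (auto simp: scalar_prod_def lessThan_atLeast0 intro!: sum.cong)

lemma GL_iff: "(A::'a::comm_ring_1 mat) \<in> GL n \<longleftrightarrow> A \<in> carrier_mat n n \<and> det A dvd 1"
proof
  assume "A \<in> GL n"
  then have A: "A \<in> carrier_mat n n" and "invertible_mat A" unfolding GL_def by auto
  then obtain B where AB: "A * B = 1\<^sub>m n" and BA: "B * A = 1\<^sub>m (dim_row B)"
    unfolding invertible_mat_def inverts_mat_def by auto
  have "dim_col B = n" using AB by (metis index_mult_mat(3) index_one_mat(3))
  moreover have "dim_row B = n" using BA A by (metis carrier_matD(2) index_mult_mat(3) index_one_mat(3))
  ultimately have B: "B \<in> carrier_mat n n" by auto
  have "det A * det B = 1" using det_mult[OF A B] AB by simp
  then show "A \<in> carrier_mat n n \<and> det A dvd 1" using A by (metis dvd_triv_left)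
next
  assume "A \<in> carrier_mat n n \<and> det A dvd 1"
  then have A: "A \<in> carrier_mat n n" and u: "det A dvd 1" by auto
  obtain e where e0: "1 = det A * e" using u by (auto elim: dvdE)
  then have e: "e * det A = 1" by (simp add: mult.commute)
  define B where "B = e \<cdot>\<^sub>m adj_mat A"
  have adjA: "adj_mat A \<in> carrier_mat n n" using adj_mat(1)[OF A] .
  have "A * B = e \<cdot>\<^sub>m (A * adj_mat A)" unfolding B_def by (rule mult_smult_distrib[OF A adjA])
  also have "\<dots> = 1\<^sub>m n" unfolding adj_mat(2)[OF A]
    by (rule eq_matI) (auto simp: e mult.assoc[symmetric])
  finally have AB: "A * B = 1\<^sub>m n" .
  have "B * A = e \<cdot>\<^sub>m (adj_mat A * A)" unfolding B_def by (rule mult_smult_assoc_mat[OF adjA A])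
  also have "\<dots> = 1\<^sub>m n" unfolding adj_mat(3)[OF A]
    by (rule eq_matI) (auto simp: e mult.assoc[symmetric])
  finally have BA: "B * A = 1\<^sub>m n" .
  have "dim_row B = n" unfolding B_def using adjA by simp
  then have "invertible_mat A" unfolding invertible_mat_def inverts_mat_def using A AB BA by auto
  then show "A \<in> GL n" unfolding GL_def using A by auto
qed

lemma GL_mult: "A \<in> GL n \<Longrightarrow> B \<in> GL n \<Longrightarrow> A * B \<in> GL n"
  unfolding GL_iff by (auto simp: det_mult)

lemma U_up_det: "U \<in> U_up n \<Longrightarrow> det U = 1"
proof -
  assume U: "U \<in> U_up n"
  then have c: "U \<in> carrier_mat n n" unfolding U_up_def by auto
  have "upper_triangular U" unfolding upper_triangular_def using U c unfolding U_up_def by auto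
  then have "det U = prod_list (diag_mat U)" using det_upper_triangular c by blast
  also have "\<dots> = 1" unfolding prod_list_diag_prod using U c unfolding U_up_def by auto
  finally show ?thesis .
qed

lemma U_lw_det: "U \<in> U_lw n \<Longrightarrow> det U = 1"
proof -
  assume U: "U \<in> U_lw n"
  then have c: "U \<in> carrier_mat n n" unfolding U_lw_def by auto
  have "det U = prod_list (diag_mat U)" using U c unfolding U_lw_def
    by (intro det_lower_triangular[OF _ c]) auto
  also have "\<dots> = 1" unfolding prod_list_diag_prod using U c unfolding U_lw_def by auto
  finally show ?thesis .
qed

lemma U_up_GL: "U \<in> U_up n \<Longrightarrow> U \<in> GL n"
proof -
  assume U: "U \<in> U_up n"
  then have "det U = 1" by (rule U_up_det)
  then show ?thesis using U unfolding GL_iff U_up_def by auto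
qed

lemma U_lw_GL: "U \<in> U_lw n \<Longrightarrow> U \<in> GL n"
proof -
  assume U: "U \<in> U_lw n"
  then have "det U = 1" by (rule U_lw_det)
  then show ?thesis using U unfolding GL_iff U_lw_def by auto
qed

lemma U_lw_mult:
  assumes L: "L \<in> U_lw n" and M: "M \<in> U_lw n"
  shows "L * M \<in> U_lw n"
proof -
  have cL: "L \<in> carrier_mat n n" using L unfolding U_lw_def by auto
  have cM: "M \<in> carrier_mat n n" using M unfolding U_lw_def by auto
  have Lz: "\<And>i j. i < n \<Longrightarrow> j < n \<Longrightarrow> i < j \<Longrightarrow> L $$ (i,j) = 0" using L unfolding U_lw_def by auto
  have Mz: "\<And>i j. i < n \<Longrightarrow> j < n \<Longrightarrow> i < j \<Longrightarrow> M $$ (i,j) = 0" using M unfolding U_lw_def by auto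
  have L1: "\<And>i. i < n \<Longrightarrow> L $$ (i,i) = 1" using L unfolding U_lw_def by auto
  have M1: "\<And>i. i < n \<Longrightarrow> M $$ (i,i) = 1" using M unfolding U_lw_def by auto
  have diag: "(L*M) $$ (i,i) = 1" if i: "i < n" for i
  proof -
    have "(L*M) $$ (i,i) = (\<Sum>l<n. L$$(i,l) * M$$(l,i))" by (rule mult_entry[OF cL cM i i])
    also have "\<dots> = (\<Sum>l<n. if l = i then 1 else 0)"
    proof (rule sum.cong[OF refl])
      fix l assume l: "l \<in> {..<n}"
      show "L$$(i,l) * M$$(l,i) = (if l = i then 1 else 0)"
        using l i Lz[of i l] Mz[of l i] L1[of i] M1[of i] by (cases "l < i"; cases "i < l") auto
    qed
    also have "\<dots> = 1" using i by simp
    finally show ?thesis .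
  qed
  have off: "(L*M) $$ (i,j) = 0" if i: "i < n" and j: "j < n" and ij: "i < j" for i j
  proof -
    have "(L*M) $$ (i,j) = (\<Sum>l<n. L$$(i,l) * M$$(l,j))" by (rule mult_entry[OF cL cM i j])
    also have "\<dots> = (\<Sum>l<n. 0)"
    proof (rule sum.cong[OF refl])
      fix l assume l: "l \<in> {..<n}"
      show "L$$(i,l) * M$$(l,j) = 0"
        using l i j ij Lz[of i l] Mz[of l j] by (cases "i < l") auto
    qed
    finally show ?thesis by simp
  qed
  show ?thesis unfolding U_lw_def using cL cM diag off by auto
qed

lemma U_up_mult:
  assumes L: "L \<in> U_up n" and M: "M \<in> U_up n"
  shows "L * M \<in> U_up n"
proof -
  have cL: "L \<in> carrier_mat n n" using L unfolding U_up_def by auto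
  have cM: "M \<in> carrier_mat n n" using M unfolding U_up_def by auto
  have Lz: "\<And>i j. i < n \<Longrightarrow> j < n \<Longrightarrow> j < i \<Longrightarrow> L $$ (i,j) = 0" using L unfolding U_up_def by auto
  have Mz: "\<And>i j. i < n \<Longrightarrow> j < n \<Longrightarrow> j < i \<Longrightarrow> M $$ (i,j) = 0" using M unfolding U_up_def by auto
  have L1: "\<And>i. i < n \<Longrightarrow> L $$ (i,i) = 1" using L unfolding U_up_def by auto
  have M1: "\<And>i. i < n \<Longrightarrow> M $$ (i,i) = 1" using M unfolding U_up_def by auto
  have diag: "(L*M) $$ (i,i) = 1" if i: "i < n" for i
  proof -
    have "(L*M) $$ (i,i) = (\<Sum>l<n. L$$(i,l) * M$$(l,i))" by (rule mult_entry[OF cL cM i i])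
    also have "\<dots> = (\<Sum>l<n. if l = i then 1 else 0)"
    proof (rule sum.cong[OF refl])
      fix l assume l: "l \<in> {..<n}"
      show "L$$(i,l) * M$$(l,i) = (if l = i then 1 else 0)"
        using l i Lz[of i l] Mz[of l i] L1[of i] M1[of i] by (cases "l < i"; cases "i < l") auto
    qed
    also have "\<dots> = 1" using i by simp
    finally show ?thesis .
  qed
  have off: "(L*M) $$ (i,j) = 0" if i: "i < n" and j: "j < n" and ij: "j < i" for i j
  proof -
    have "(L*M) $$ (i,j) = (\<Sum>l<n. L$$(i,l) * M$$(l,j))" by (rule mult_entry[OF cL cM i j])
    also have "\<dots> = (\<Sum>l<n. 0)"
    proof (rule sum.cong[OF refl])
      fix l assume l: "l \<in> {..<n}"
      show "L$$(i,l) * M$$(l,j) = 0"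
        using l i j ij Lz[of i l] Mz[of l j] by (cases "l < i") auto
    qed
    finally show ?thesis by simp
  qed
  show ?thesis unfolding U_up_def using cL cM diag off by auto
qed

lemma U_lw_inv:
  assumes L: "L \<in> U_lw n" and X: "X \<in> carrier_mat n n" and LX: "L * X = 1\<^sub>m n"
  shows "X \<in> U_lw n"
proof -
  have cL: "L \<in> carrier_mat n n" using L unfolding U_lw_def by auto
  have Lz: "\<And>i j. i < n \<Longrightarrow> j < n \<Longrightarrow> i < j \<Longrightarrow> L $$ (i,j) = 0" using L unfolding U_lw_def by auto
  have L1: "\<And>i. i < n \<Longrightarrow> L $$ (i,i) = 1" using L unfolding U_lw_def by auto
  have main: "\<forall>i. i < n \<longrightarrow> i \<le> j \<longrightarrow> X $$ (i,j) = (if i = j then 1 else 0)" if j: "j < n" for j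
  proof (intro allI)
    fix i show "i < n \<longrightarrow> i \<le> j \<longrightarrow> X $$ (i,j) = (if i = j then 1 else 0)"
    proof (induction i rule: less_induct)
      case (less i)
      show ?case
      proof (intro impI)
        assume i: "i < n" and ij: "i \<le> j"
        have "(if i = j then 1 else 0) = (L * X) $$ (i,j)" using LX i j by simp
        also have "\<dots> = (\<Sum>l<n. L$$(i,l) * X$$(l,j))" by (rule mult_entry[OF cL X i j])
        also have "\<dots> = (\<Sum>l<n. if l = i then X$$(i,j) else 0)"
        proof (rule sum.cong[OF refl])
          fix l assume l: "l \<in> {..<n}"
          show "L$$(i,l) * X$$(l,j) = (if l = i then X$$(i,j) else 0)"
          proof (cases "l < i")
            case True
            then have "X$$(l,j) = 0" using less.IH[of l] l ij by auto
            then show ?thesis using True by auto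
          next
            case False
            then show ?thesis using Lz[of i l] L1[of i] l i by (cases "l = i") auto
          qed
        qed
        also have "\<dots> = X$$(i,j)" using i by simp
        finally show "X $$ (i,j) = (if i = j then 1 else 0)" by simp
      qed
    qed
  qed
  show ?thesis unfolding U_lw_def using X main by fastforce
qed

lemma U_up_inv:
  assumes L: "L \<in> U_up n" and X: "X \<in> carrier_mat n n" and LX: "L * X = 1\<^sub>m n"
  shows "X \<in> U_up n"
proof -
  have cL: "L \<in> carrier_mat n n" using L unfolding U_up_def by auto
  have Lz: "\<And>i j. i < n \<Longrightarrow> j < n \<Longrightarrow> j < i \<Longrightarrow> L $$ (i,j) = 0" using L unfolding U_up_def by auto
  have L1: "\<And>i. i < n \<Longrightarrow> L $$ (i,i) = 1" using L unfolding U_up_def by auto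
  have main: "\<forall>i. i < n \<longrightarrow> j \<le> i \<longrightarrow> X $$ (i,j) = (if i = j then 1 else 0)" if j: "j < n" for j
  proof (intro allI)
    fix i show "i < n \<longrightarrow> j \<le> i \<longrightarrow> X $$ (i,j) = (if i = j then 1 else 0)"
    proof (induction "n - i" arbitrary: i rule: less_induct)
      case (less i)
      show ?case
      proof (intro impI)
        assume i: "i < n" and ij: "j \<le> i"
        have "(if i = j then 1 else 0) = (L * X) $$ (i,j)" using LX i j by simp
        also have "\<dots> = (\<Sum>l<n. L$$(i,l) * X$$(l,j))" by (rule mult_entry[OF cL X i j])
        also have "\<dots> = (\<Sum>l<n. if l = i then X$$(i,j) else 0)"
        proof (rule sum.cong[OF refl])
          fix l assume l: "l \<in> {..<n}"
          show "L$$(i,l) * X$$(l,j) = (if l = i then X$$(i,j) else 0)"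
          proof (cases "i < l")
            case True
            then have "X$$(l,j) = 0" using less(1)[of l] l ij i by auto
            then show ?thesis using True by auto
          next
            case False
            then show ?thesis using Lz[of i l] L1[of i] l i by (cases "l = i") auto
          qed
        qed
        also have "\<dots> = X$$(i,j)" using i by simp
        finally show "X $$ (i,j) = (if i = j then 1 else 0)" by simp
      qed
    qed
  qed
  show ?thesis unfolding U_up_def using X main by fastforce
qed

lemma GL_inv:
  assumes "A \<in> GL n"
  obtains B where "B \<in> carrier_mat n n" "A * B = 1\<^sub>m n" "B * A = 1\<^sub>m n"
proof -
  from assms have A: "A \<in> carrier_mat n n" and "invertible_mat A" unfolding GL_def by auto
  then obtain B where AB: "A * B = 1\<^sub>m n" and BA: "B * A = 1\<^sub>m (dim_row B)"
    unfolding invertible_mat_def inverts_mat_def by auto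
  have "dim_col B = n" using AB by (metis index_mult_mat(3) index_one_mat(3))
  moreover have "dim_row B = n" using BA A by (metis carrier_matD(2) index_mult_mat(3) index_one_mat(3))
  ultimately have B: "B \<in> carrier_mat n n" by auto
  show ?thesis using that B AB BA \<open>dim_row B = n\<close> by auto
qed

definition cupper :: "'a::comm_ring_1 \<Rightarrow> nat \<Rightarrow> 'a mat \<Rightarrow> bool" where
  "cupper c n H \<longleftrightarrow> (\<forall>i<n. \<forall>j<i. c dvd H $$ (i,j))"

definition extm :: "nat \<Rightarrow> 'a::comm_ring_1 mat \<Rightarrow> 'a mat" where
  "extm n X = mat (Suc n) (Suc n) (\<lambda>(i,j). if i < n \<and> j < n then X $$ (i,j) else if i = j then 1 else 0)"

definition lastrow :: "nat \<Rightarrow> (nat \<Rightarrow> 'a::comm_ring_1) \<Rightarrow> 'a mat" where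
  "lastrow n t = mat (Suc n) (Suc n) (\<lambda>(i,j). if i = j then 1 else if i = n \<and> j < n then t j else 0)"

lemma extm_dim[simp]: "dim_row (extm n X) = Suc n" "dim_col (extm n X) = Suc n"
  unfolding extm_def by simp_all

lemma lastrow_dim[simp]: "dim_row (lastrow n t) = Suc n" "dim_col (lastrow n t) = Suc n"
  unfolding lastrow_def by simp_all

lemma extm_carrier[simp]: "extm n X \<in> carrier_mat (Suc n) (Suc n)"
  unfolding extm_def by simp

lemma lastrow_carrier[simp]: "lastrow n t \<in> carrier_mat (Suc n) (Suc n)"
  unfolding lastrow_def by simp

lemma extm_index: "i < Suc n \<Longrightarrow> j < Suc n \<Longrightarrow>
  extm n X $$ (i,j) = (if i < n \<and> j < n then X $$ (i,j) else if i = j then 1 else 0)"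
  unfolding extm_def by simp

lemma lastrow_index: "i < Suc n \<Longrightarrow> j < Suc n \<Longrightarrow>
  lastrow n t $$ (i,j) = (if i = j then 1 else if i = n \<and> j < n then t j else 0)"
  unfolding lastrow_def by simp

lemma extm_U_up: "X \<in> U_up n \<Longrightarrow> extm n X \<in> U_up (Suc n)"
  unfolding U_up_def by (auto simp: extm_index)

lemma extm_U_lw: "X \<in> U_lw n \<Longrightarrow> extm n X \<in> U_lw (Suc n)"
  unfolding U_lw_def by (auto simp: extm_index)

lemma lastrow_U_lw: "lastrow n t \<in> U_lw (Suc n)"
  unfolding U_lw_def by (auto simp: lastrow_index)

lemma sum_delta_right: fixes n :: nat shows "(\<Sum>l<n. f l * (if l = j then 1 else 0)) = (if j < n then f j else (0::'a::comm_ring_1))"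
proof -
  have "(\<Sum>l<n. f l * (if l = j then 1 else 0)) = (\<Sum>l<n. if l = j then f j else 0)"
    by (rule sum.cong) auto
  also have "\<dots> = (if j \<in> {..<n} then f j else 0)" by (rule sum.delta) simp
  finally show ?thesis by simp
qed

lemma sum_delta_left: fixes n :: nat shows "(\<Sum>l<n. (if i = l then 1 else 0) * f l) = (if i < n then f i else (0::'a::comm_ring_1))"
proof -
  have "(\<Sum>l<n. (if i = l then 1 else 0) * f l) = (\<Sum>l<n. if l = i then f i else 0)"
    by (rule sum.cong) auto
  also have "\<dots> = (if i \<in> {..<n} then f i else 0)" by (rule sum.delta) simp
  finally show ?thesis by simp
qed

lemma mult_extm:
  assumes M: "M \<in> carrier_mat (Suc n) (Suc n)" and i: "i < Suc n" and j: "j < Suc n"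
  shows "(M * extm n Y) $$ (i,j) = (if j < n then (\<Sum>l<n. M$$(i,l) * Y$$(l,j)) else M$$(i,n))"
proof -
  have "(M * extm n Y) $$ (i,j) = (\<Sum>l<Suc n. M$$(i,l) * extm n Y $$(l,j))"
    by (rule mult_entry[OF M extm_carrier i j])
  also have "\<dots> = (\<Sum>l<n. M$$(i,l) * extm n Y $$(l,j)) + M$$(i,n) * extm n Y $$ (n,j)"
    by simp
  also have "\<dots> = (if j < n then (\<Sum>l<n. M$$(i,l) * Y$$(l,j)) else M$$(i,n))"
  proof (cases "j < n")
    case True
    have "(\<Sum>l<n. M$$(i,l) * extm n Y $$(l,j)) = (\<Sum>l<n. M$$(i,l) * Y$$(l,j))"
      by (rule sum.cong) (auto simp: extm_index True j)
    then show ?thesis using True j by (simp add: extm_index)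
  next
    case False
    then have jn: "j = n" using j by simp
    have "(\<Sum>l<n. M$$(i,l) * extm n Y $$(l,j)) = (\<Sum>l<n. 0)"
      by (rule sum.cong) (auto simp: extm_index jn)
    then show ?thesis using jn by (simp add: extm_index)
  qed
  finally show ?thesis .
qed

lemma mult_lastrow:
  assumes M: "M \<in> carrier_mat (Suc n) (Suc n)" and i: "i < Suc n" and j: "j < Suc n"
  shows "(M * lastrow n t) $$ (i,j) = (if j < n then M$$(i,j) + M$$(i,n) * t j else M$$(i,n))"
proof -
  have "(M * lastrow n t) $$ (i,j) = (\<Sum>l<Suc n. M$$(i,l) * lastrow n t $$(l,j))"
    by (rule mult_entry[OF M lastrow_carrier i j])
  also have "\<dots> = (\<Sum>l<n. M$$(i,l) * lastrow n t $$(l,j)) + M$$(i,n) * lastrow n t $$ (n,j)"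
    by simp
  also have "\<dots> = (if j < n then M$$(i,j) + M$$(i,n) * t j else M$$(i,n))"
  proof (cases "j < n")
    case True
    have "(\<Sum>l<n. M$$(i,l) * lastrow n t $$(l,j)) = (\<Sum>l<n. M$$(i,l) * (if l = j then 1 else 0))"
      by (rule sum.cong) (auto simp: lastrow_index True j)
    then show ?thesis using True j by (simp add: lastrow_index sum_delta_right)
  next
    case False
    then have jn: "j = n" using j by simp
    have "(\<Sum>l<n. M$$(i,l) * lastrow n t $$(l,j)) = (\<Sum>l<n. 0)"
      by (rule sum.cong) (auto simp: lastrow_index jn)
    then show ?thesis using jn by (simp add: lastrow_index)
  qed
  finally show ?thesis .
qed

lemma mat_delete_last_index:
  "A \<in> carrier_mat (Suc n) (Suc n) \<Longrightarrow> i < n \<Longrightarrow> j < n \<Longrightarrow> mat_delete A n n $$ (i,j) = A $$ (i,j)"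
  unfolding mat_delete_def by simp

lemma mat_delete_last_carrier:
  "A \<in> carrier_mat (Suc n) (Suc n) \<Longrightarrow> mat_delete A n n \<in> carrier_mat n n"
  using mat_delete_carrier[of A "Suc n" "Suc n" n n] by simp

lemma mat_delete_mult_extm:
  assumes M: "M \<in> carrier_mat (Suc n) (Suc n)" and Y: "Y \<in> carrier_mat n n"
  shows "mat_delete (M * extm n Y) n n = mat_delete M n n * Y"
proof (rule eq_matI)
  have MY: "M * extm n Y \<in> carrier_mat (Suc n) (Suc n)" using M by simp
  have D: "mat_delete M n n \<in> carrier_mat n n" by (rule mat_delete_last_carrier[OF M])
  fix i j assume i: "i < dim_row (mat_delete M n n * Y)" and j: "j < dim_col (mat_delete M n n * Y)"
  then have i': "i < n" and j': "j < n" using D Y by auto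
  have "mat_delete (M * extm n Y) n n $$ (i,j) = (M * extm n Y) $$ (i,j)"
    by (rule mat_delete_last_index[OF MY i' j'])
  also have "\<dots> = (\<Sum>l<n. M$$(i,l) * Y$$(l,j))" using mult_extm[OF M, of i j] i' j' by simp
  also have "\<dots> = (\<Sum>l<n. mat_delete M n n $$(i,l) * Y$$(l,j))"
    by (rule sum.cong) (auto simp: mat_delete_last_index[OF M] i')
  also have "\<dots> = (mat_delete M n n * Y) $$ (i,j)" by (rule mult_entry[OF D Y i' j', symmetric])
  finally show "mat_delete (M * extm n Y) n n $$ (i,j) = (mat_delete M n n * Y) $$ (i,j)" .
next
  show "dim_row (mat_delete (M * extm n Y) n n) = dim_row (mat_delete M n n * Y)" using M Y by simp
  show "dim_col (mat_delete (M * extm n Y) n n) = dim_col (mat_delete M n n * Y)" using M Y by simp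
qed

lemma cupper_Suc:
  assumes M: "M \<in> carrier_mat (Suc n) (Suc n)"
    and d: "cupper c n (mat_delete M n n)" and r: "\<forall>j<n. c dvd M $$ (n,j)"
  shows "cupper c (Suc n) M"
  unfolding cupper_def
proof (intro allI impI)
  fix i j assume i: "i < Suc n" and ji: "j < i"
  show "c dvd M $$ (i,j)"
  proof (cases "i < n")
    case True
    then have "c dvd mat_delete M n n $$ (i,j)" using d ji unfolding cupper_def by auto
    then show ?thesis using mat_delete_last_index[OF M True] ji True by simp
  next
    case False
    then have "i = n" using i by simp
    then show ?thesis using r ji by simp
  qed
qed

lemma lastrow_extm_comm:
  assumes Y: "Y \<in> carrier_mat n n"
  shows "lastrow n t * extm n Y = extm n Y * lastrow n (\<lambda>j. \<Sum>k<n. t k * Y$$(k,j))"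
proof (rule eq_matI)
  fix i j assume i0: "i < dim_row (extm n Y * lastrow n (\<lambda>j. \<Sum>k<n. t k * Y$$(k,j)))"
    and j0: "j < dim_col (extm n Y * lastrow n (\<lambda>j. \<Sum>k<n. t k * Y$$(k,j)))"
  then have i: "i < Suc n" and j: "j < Suc n" by auto
  have L: "(lastrow n t * extm n Y) $$ (i,j) =
     (if j < n then (\<Sum>l<n. lastrow n t $$(i,l) * Y$$(l,j)) else lastrow n t $$(i,n))"
    by (rule mult_extm[OF lastrow_carrier i j])
  have R: "(extm n Y * lastrow n (\<lambda>j. \<Sum>k<n. t k * Y$$(k,j))) $$ (i,j) =
     (if j < n then extm n Y $$(i,j) + extm n Y $$(i,n) * (\<Sum>k<n. t k * Y$$(k,j)) else extm n Y $$(i,n))"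
    by (rule mult_lastrow[OF extm_carrier i j])
  show "(lastrow n t * extm n Y) $$ (i,j) = (extm n Y * lastrow n (\<lambda>j. \<Sum>k<n. t k * Y$$(k,j))) $$ (i,j)"
  proof (cases "i < n")
    case True
    then have iT: "i < n" .
    have "(\<Sum>l<n. lastrow n t $$(i,l) * Y$$(l,j)) = (\<Sum>l<n. (if i = l then 1 else 0) * Y$$(l,j))"
      using iT by (intro sum.cong) (auto simp: lastrow_index)
    also have "\<dots> = Y$$(i,j)" using True by (simp add: sum_delta_left)
    finally have s: "(\<Sum>l<n. lastrow n t $$(i,l) * Y$$(l,j)) = Y$$(i,j)" .
    show ?thesis unfolding L R using s True i j by (simp add: extm_index lastrow_index)
  next
    case False
    then have iN: "i = n" using i by simp
    have "(\<Sum>l<n. lastrow n t $$(i,l) * Y$$(l,j)) = (\<Sum>l<n. t l * Y$$(l,j))"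
      by (rule sum.cong) (auto simp: lastrow_index iN)
    then show ?thesis unfolding L R using iN i j by (simp add: extm_index lastrow_index)
  qed
qed auto

lemma main_induct:
  fixes c :: "'a::idom"
  assumes bez: "bezout_domain TYPE('a)" and sr: "stable_range_15 TYPE('a)" and c0: "c \<noteq> 0"
  shows "A \<in> carrier_mat n n \<Longrightarrow> cop (det A) c \<Longrightarrow> \<exists>U\<in>U_up n. \<exists>L\<in>U_lw n. cupper c n (A*U*L)"
proof (induction n arbitrary: A)
  case 0
  have u: "1\<^sub>m 0 \<in> U_up 0" and l: "1\<^sub>m 0 \<in> U_lw 0" unfolding U_up_def U_lw_def by auto
  have cu: "cupper c 0 (A * 1\<^sub>m 0 * 1\<^sub>m 0)" unfolding cupper_def by simp
  show ?case
  proof (rule bexI[OF _ u], rule bexI[OF _ l])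
    show "cupper c 0 (A * 1\<^sub>m 0 * 1\<^sub>m 0)" by (rule cu)
  qed
next
  case (Suc n)
  note A = Suc.prems(1) and cd = Suc.prems(2)
  define x where "x = (\<lambda>j. A $$ (n,j))"
  obtain d w g where d: "d = (\<Sum>j<n. w j * x j)" and g: "\<forall>j<n. x j = g j * d"
    using bezout_vec[OF bez, where m=n and x=x] by blast
  define cf where "cf = (\<lambda>j. cofactor A n j)"
  have lap: "det A = (\<Sum>j<Suc n. A$$(n,j) * cf j)" unfolding cf_def by (rule laplace_expansion_row[OF A]) simp
  have s1: "(\<Sum>j<n. A$$(n,j) * cf j) = (\<Sum>j<n. d * (g j * cf j))"
  proof (rule sum.cong[OF refl])
    fix j assume "j \<in> {..<n}"
    then have "A$$(n,j) = g j * d" using g unfolding x_def by auto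
    then show "A$$(n,j) * cf j = d * (g j * cf j)" by (simp add: mult_ac)
  qed
  define S where "S = (\<Sum>j<n. g j * cf j)"
  have lap2: "det A = d * S + A$$(n,n) * cf n"
    using lap s1 unfolding S_def by (simp add: sum_distrib_left)
  obtain \<alpha> \<beta> where ab: "\<alpha> * det A + \<beta> * c = 1" using cd unfolding cop_def by auto
  then have "\<alpha> * (d * S + A$$(n,n) * cf n) + \<beta> * c = 1" unfolding lap2 .
  moreover have "\<alpha> * (d * S + A$$(n,n) * cf n) + \<beta> * c = (\<alpha> * cf n) * A$$(n,n) + (\<alpha> * S) * d + \<beta> * c"
    by (simp add: algebra_simps)
  ultimately have e3: "(\<alpha> * cf n) * A$$(n,n) + (\<alpha> * S) * d + \<beta> * c = 1" by simp
  have "\<exists>x y z. x * A$$(n,n) + y * d + z * c = 1" by (rule exI, rule exI, rule exI, rule e3)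
  then have "gen_ideal {A$$(n,n), d, c} = UNIV" by (rule three_iff[THEN iffD2])
  then have "\<exists>r. gen_ideal {A$$(n,n) + d * r, c} = UNIV"
    by (rule sr[unfolded stable_range_15_def, rule_format, OF c0])
  then obtain r where "gen_ideal {A$$(n,n) + d * r, c} = UNIV" by (elim exE)
  then have cu: "cop (A$$(n,n) + d*r) c" by (rule cop_iff[THEN iffD1])
  define u where "u = A$$(n,n) + d*r"
  obtain v e where ve: "v * u + e * c = 1" using cu unfolding cop_def u_def by auto
  define U1 where "U1 = mat (Suc n) (Suc n) (\<lambda>(i,j). if i = j then 1 else if j = n \<and> i < n then w i * r else 0)"
  have U1c: "U1 \<in> carrier_mat (Suc n) (Suc n)" unfolding U1_def by simp
  have U1u: "U1 \<in> U_up (Suc n)" unfolding U_up_def U1_def by auto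
  define A1 where "A1 = A * U1"
  have A1c: "A1 \<in> carrier_mat (Suc n) (Suc n)" unfolding A1_def using A U1c by simp
  have A1r: "A1 $$ (n,j) = A$$(n,j)" if j: "j < n" for j
  proof -
    have "A1 $$ (n,j) = (\<Sum>l<Suc n. A$$(n,l) * U1$$(l,j))" unfolding A1_def
      by (rule mult_entry[OF A U1c]) (use j in auto)
    also have "\<dots> = (\<Sum>l<Suc n. A$$(n,l) * (if l = j then 1 else 0))"
      by (rule sum.cong) (use j in \<open>auto simp: U1_def\<close>)
    also have "\<dots> = A$$(n,j)" using j by (simp add: sum_delta_right)
    finally show ?thesis .
  qed
  have A1n: "A1 $$ (n,n) = u"
  proof -
    have "A1 $$ (n,n) = (\<Sum>l<Suc n. A$$(n,l) * U1$$(l,n))" unfolding A1_def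
      by (rule mult_entry[OF A U1c]) auto
    also have "\<dots> = (\<Sum>l<n. A$$(n,l) * U1$$(l,n)) + A$$(n,n) * U1$$(n,n)" by simp
    also have "(\<Sum>l<n. A$$(n,l) * U1$$(l,n)) = (\<Sum>l<n. (w l * x l) * r)"
      by (rule sum.cong) (auto simp: U1_def x_def mult_ac)
    also have "\<dots> = d * r" unfolding d by (simp add: sum_distrib_right)
    finally show ?thesis unfolding u_def by (simp add: U1_def)
  qed
  define t where "t = (\<lambda>j. - (A$$(n,j) * v))"
  define M where "M = A1 * lastrow n t"
  have Mc: "M \<in> carrier_mat (Suc n) (Suc n)" unfolding M_def using A1c by simp
  have Mr: "c dvd M$$(n,j)" if j: "j < n" for j
  proof -
    have "M$$(n,j) = A1$$(n,j) + A1$$(n,n) * t j" unfolding M_def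
      using mult_lastrow[OF A1c, of n j t] j by simp
    also have "\<dots> = A$$(n,j) * (1 - v * u)" unfolding A1r[OF j] A1n t_def by (simp add: algebra_simps)
    also have "1 - v * u = e * c" by (simp add: ve[symmetric])
    also have "A$$(n,j) * (e * c) = c * (A$$(n,j) * e)" by (simp add: mult_ac)
    finally show ?thesis by simp
  qed
  have detM: "det M = det A"
  proof -
    have "det M = det A1 * det (lastrow n t)" unfolding M_def by (rule det_mult[OF A1c lastrow_carrier])
    also have "det A1 = det A * det U1" unfolding A1_def by (rule det_mult[OF A U1c])
    moreover have "det (lastrow n t) = 1" by (rule U_lw_det[OF lastrow_U_lw])
    moreover have "det U1 = 1" by (rule U_up_det[OF U1u])
    ultimately show ?thesis by simp
  qed
  define M' where "M' = mat_delete M n n"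
  have M'c: "M' \<in> carrier_mat n n" unfolding M'_def by (rule mat_delete_last_carrier[OF Mc])
  have lapM: "det M = (\<Sum>j<Suc n. M$$(n,j) * cofactor M n j)" by (rule laplace_expansion_row[OF Mc]) simp
  have "c dvd (\<Sum>j<n. M$$(n,j) * cofactor M n j)"
    by (rule dvd_sum) (auto intro: dvd_mult2 Mr)
  then obtain k where k: "(\<Sum>j<n. M$$(n,j) * cofactor M n j) = c * k" by (auto elim: dvdE)
  have pw: "(-1::'a)^(n+n) = 1" by (simp add: mult_2[symmetric])
  have cofn: "cofactor M n n = det M'" unfolding cofactor_def M'_def using pw by simp
  have Mn: "M$$(n,n) = u" unfolding M_def using mult_lastrow[OF A1c, of n n t] A1n by simp
  have dA: "det A = c * k + u * det M'" using lapM k cofn Mn detM by simp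
  have "\<alpha> * (c * k + u * det M') + \<beta> * c = 1" using ab unfolding dA .
  moreover have "\<alpha> * (c * k + u * det M') + \<beta> * c = (\<alpha> * u) * det M' + (\<alpha> * k + \<beta>) * c"
    by (simp add: algebra_simps)
  ultimately have e5: "(\<alpha> * u) * det M' + (\<alpha> * k + \<beta>) * c = 1" by simp
  have cM': "cop (det M') c" unfolding cop_def by (rule exI, rule exI, rule e5)
  from Suc.IH[OF M'c cM'] obtain U2' L2' where U2'u: "U2' \<in> U_up n" and L2'l: "L2' \<in> U_lw n"
    and cup: "cupper c n (M' * U2' * L2')" by (elim bexE)
  have U2'c: "U2' \<in> carrier_mat n n" using U2'u unfolding U_up_def by auto
  have L2'c: "L2' \<in> carrier_mat n n" using L2'l unfolding U_lw_def by auto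
  define U2 where "U2 = extm n U2'"
  define L2 where "L2 = extm n L2'"
  define s where "s = (\<lambda>j. \<Sum>k<n. t k * U2'$$(k,j))"
  define L1' where "L1' = lastrow n s"
  have comm: "lastrow n t * U2 = U2 * L1'" unfolding U2_def L1'_def s_def by (rule lastrow_extm_comm[OF U2'c])
  define F where "F = M * U2 * L2"
  have MU2c: "M * U2 \<in> carrier_mat (Suc n) (Suc n)" unfolding U2_def using Mc by simp
  have del: "mat_delete F n n = M' * U2' * L2'"
    unfolding F_def L2_def M'_def U2_def
    by (simp only: mat_delete_mult_extm[OF MU2c[unfolded U2_def] L2'c] mat_delete_mult_extm[OF Mc U2'c])
  have rowF: "c dvd F$$(n,j)" if j: "j < n" for j
  proof -
    have "F$$(n,j) = (\<Sum>l<n. (M*U2)$$(n,l) * L2'$$(l,j))"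
      unfolding F_def L2_def using mult_extm[OF MU2c, of n j L2'] j by simp
    also have "\<dots> = (\<Sum>l<n. (\<Sum>k<n. M$$(n,k) * U2'$$(k,l)) * L2'$$(l,j))"
      by (rule sum.cong) (auto simp: U2_def mult_extm[OF Mc])
    finally have Fe: "F$$(n,j) = (\<Sum>l<n. (\<Sum>k<n. M$$(n,k) * U2'$$(k,l)) * L2'$$(l,j))" .
    have "c dvd (\<Sum>l<n. (\<Sum>k<n. M$$(n,k) * U2'$$(k,l)) * L2'$$(l,j))"
      by (intro dvd_sum dvd_mult2) (auto intro: dvd_mult2 Mr)
    then show ?thesis using Fe by simp
  qed
  have Fc: "F \<in> carrier_mat (Suc n) (Suc n)" unfolding F_def L2_def using MU2c by simp
  have cupF: "cupper c (Suc n) F"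
    by (rule cupper_Suc[OF Fc]) (use del cup rowF in auto)
  have U2c: "U2 \<in> carrier_mat (Suc n) (Suc n)" unfolding U2_def by simp
  have L2c: "L2 \<in> carrier_mat (Suc n) (Suc n)" unfolding L2_def by simp
  have L1'c: "L1' \<in> carrier_mat (Suc n) (Suc n)" unfolding L1'_def by simp
  have Lc: "lastrow n t \<in> carrier_mat (Suc n) (Suc n)" by simp
  have eq: "A * (U1 * U2) * (L1' * L2) = F"
  proof -
    have "A * (U1 * U2) * (L1' * L2) = (A * U1) * (U2 * L1') * L2"
      using A U1c U2c L1'c L2c by (simp add: assoc_mult_mat[where ?n\<^sub>1="Suc n" and ?n\<^sub>2="Suc n" and ?n\<^sub>3="Suc n" and ?n\<^sub>4="Suc n"])
    also have "\<dots> = (A * U1) * (lastrow n t * U2) * L2" unfolding comm ..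
    also have "\<dots> = F" unfolding F_def M_def A1_def[symmetric]
      using assoc_mult_mat[OF A1c Lc U2c] by simp
    finally show ?thesis .
  qed
  have Uu: "U1 * U2 \<in> U_up (Suc n)" by (rule U_up_mult[OF U1u]) (simp add: U2_def extm_U_up[OF U2'u])
  have Ll: "L1' * L2 \<in> U_lw (Suc n)" by (rule U_lw_mult) (simp_all add: L1'_def lastrow_U_lw L2_def extm_U_lw[OF L2'l])
  show ?case
  proof (rule bexI[OF _ Uu], rule bexI[OF _ Ll])
    show "cupper c (Suc n) (A * (U1 * U2) * (L1' * L2))" unfolding eq by (rule cupF)
  qed
qed

lemma sum_diag_right:
  fixes n :: nat
  assumes j: "j < n"
  shows "(\<Sum>l<n. X l * (if l = j then y else 0)) = X j * (y::'a::comm_ring_1)"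
proof -
  have "(\<Sum>l<n. X l * (if l = j then y else 0)) = (\<Sum>l<n. if l = j then X j * y else 0)"
    by (rule sum.cong) auto
  also have "\<dots> = (if j \<in> {..<n} then X j * y else 0)" by (rule sum.delta) simp
  finally show ?thesis using j by simp
qed

lemma sum_diag_left:
  fixes n :: nat
  assumes i: "i < n"
  shows "(\<Sum>l<n. (if i = l then y else 0) * X l) = y * (X i::'a::comm_ring_1)"
proof -
  have "(\<Sum>l<n. (if i = l then y else 0) * X l) = (\<Sum>l<n. if l = i then y * X i else 0)"
    by (rule sum.cong) auto
  also have "\<dots> = (if i \<in> {..<n} then y * X i else 0)" by (rule sum.delta) simp
  finally show ?thesis using i by simp
qed

lemma d_matrix_chain:
  assumes dm: "d_matrix n \<Phi>"
  shows "j < n \<Longrightarrow> i \<le> j \<Longrightarrow> \<Phi>$$(i,i) dvd \<Phi>$$(j,j)"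
proof (induction j arbitrary: i)
  case 0
  then show ?case by simp
next
  case (Suc j)
  show ?case
  proof (cases "i = Suc j")
    case True
    then show ?thesis by simp
  next
    case False
    then have "i \<le> j" using Suc.prems by simp
    then have "\<Phi>$$(i,i) dvd \<Phi>$$(j,j)" using Suc.IH Suc.prems by simp
    moreover have "\<Phi>$$(j,j) dvd \<Phi>$$(Suc j, Suc j)" using dm Suc.prems unfolding d_matrix_def by auto
    ultimately show ?thesis by (rule dvd_trans)
  qed
qed

lemma d_matrix_entry: "d_matrix n \<Phi> \<Longrightarrow> i < n \<Longrightarrow> j < n \<Longrightarrow> i \<noteq> j \<Longrightarrow> \<Phi>$$(i,j) = 0"
  unfolding d_matrix_def by auto

lemma d_matrix_det: "d_matrix n \<Phi> \<Longrightarrow> det \<Phi> = (\<Prod>i = 0..<n. \<Phi>$$(i,i))"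
proof -
  assume dm: "d_matrix n \<Phi>"
  then have c: "\<Phi> \<in> carrier_mat n n" unfolding d_matrix_def by auto
  have "upper_triangular \<Phi>" unfolding upper_triangular_def using dm c unfolding d_matrix_def by auto
  then have "det \<Phi> = prod_list (diag_mat \<Phi>)" using det_upper_triangular c by blast
  then show ?thesis unfolding prod_list_diag_prod using c by simp
qed

lemma cupper_G_Phi:
  fixes \<Phi> :: "'a::idom mat"
  assumes dm: "d_matrix n \<Phi>" and dp: "det \<Phi> \<noteq> 0" and n: "0 < n"
    and H: "H \<in> GL n" and cu: "cupper (\<Phi>$$(n-1,n-1)) n H"
  shows "H \<in> G_Phi n \<Phi>"
proof -
  define c where "c = \<Phi>$$(n-1,n-1)"
  have Hc: "H \<in> carrier_mat n n" using H unfolding GL_def by auto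
  have Pc: "\<Phi> \<in> carrier_mat n n" using dm unfolding d_matrix_def by auto
  have ex: "\<exists>k. H$$(i,j) * \<Phi>$$(j,j) = \<Phi>$$(i,i) * k" if i: "i < n" and j: "j < n" for i j
  proof (cases "i \<le> j")
    case True
    then obtain q where "\<Phi>$$(j,j) = \<Phi>$$(i,i) * q" using d_matrix_chain[OF dm j] by (auto elim: dvdE)
    then have "H$$(i,j) * \<Phi>$$(j,j) = \<Phi>$$(i,i) * (H$$(i,j) * q)" by (simp add: mult_ac)
    then show ?thesis by (rule exI)
  next
    case False
    then have "c dvd H$$(i,j)" using cu i unfolding cupper_def c_def by auto
    moreover have "\<Phi>$$(i,i) dvd c" unfolding c_def using d_matrix_chain[OF dm, of "n-1" i] i n by simp
    ultimately have "\<Phi>$$(i,i) dvd H$$(i,j)" by (rule dvd_trans[rotated])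
    then obtain q where "H$$(i,j) = \<Phi>$$(i,i) * q" by (auto elim: dvdE)
    then have "H$$(i,j) * \<Phi>$$(j,j) = \<Phi>$$(i,i) * (q * \<Phi>$$(j,j))" by (simp add: mult_ac)
    then show ?thesis by (rule exI)
  qed
  define K where "K = mat n n (\<lambda>(i,j). SOME k. H$$(i,j) * \<Phi>$$(j,j) = \<Phi>$$(i,i) * k)"
  have Kc: "K \<in> carrier_mat n n" unfolding K_def by simp
  have Ks: "H$$(i,j) * \<Phi>$$(j,j) = \<Phi>$$(i,i) * K$$(i,j)" if i: "i < n" and j: "j < n" for i j
    unfolding K_def using i j someI_ex[OF ex[OF i j]] by simp
  have HK: "H * \<Phi> = \<Phi> * K"
  proof (rule eq_matI)
    fix i j assume i0: "i < dim_row (\<Phi> * K)" and j0: "j < dim_col (\<Phi> * K)"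
    then have i: "i < n" and j: "j < n" using Pc Kc by auto
    have "(H * \<Phi>) $$ (i,j) = (\<Sum>l<n. H$$(i,l) * \<Phi>$$(l,j))" by (rule mult_entry[OF Hc Pc i j])
    also have "\<dots> = (\<Sum>l<n. H$$(i,l) * (if l = j then \<Phi>$$(j,j) else 0))"
    proof (rule sum.cong[OF refl])
      fix l assume "l \<in> {..<n}"
      then show "H$$(i,l) * \<Phi>$$(l,j) = H$$(i,l) * (if l = j then \<Phi>$$(j,j) else 0)"
        using d_matrix_entry[OF dm, of l j] j by (cases "l = j") auto
    qed
    also have "\<dots> = H$$(i,j) * \<Phi>$$(j,j)" by (rule sum_diag_right[OF j])
    also have "\<dots> = \<Phi>$$(i,i) * K$$(i,j)" by (rule Ks[OF i j])
    also have "\<dots> = (\<Sum>l<n. (if i = l then \<Phi>$$(i,i) else 0) * K$$(l,j))" by (rule sum_diag_left[OF i, symmetric])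
    also have "\<dots> = (\<Sum>l<n. \<Phi>$$(i,l) * K$$(l,j))"
    proof (rule sum.cong[OF refl])
      fix l assume "l \<in> {..<n}"
      then show "(if i = l then \<Phi>$$(i,i) else 0) * K$$(l,j) = \<Phi>$$(i,l) * K$$(l,j)"
        using d_matrix_entry[OF dm, of i l] i by (cases "i = l") auto
    qed
    also have "\<dots> = (\<Phi> * K) $$ (i,j)" by (rule mult_entry[OF Pc Kc i j, symmetric])
    finally show "(H * \<Phi>) $$ (i,j) = (\<Phi> * K) $$ (i,j)" .
  qed (use Hc Pc Kc in auto)
  have "det H * det \<Phi> = det \<Phi> * det K"
    using arg_cong[OF HK, of det] det_mult[OF Hc Pc] det_mult[OF Pc Kc] by simp
  then have "det K = det H" using dp by (simp add: mult.commute)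
  then have "K \<in> GL n" using H Kc unfolding GL_iff by simp
  then show ?thesis unfolding G_Phi_def using H HK by blast
qed

lemma GL_decomp:
  fixes \<Phi> :: "'a::idom mat"
  assumes bez: "bezout_domain TYPE('a)" and sr: "stable_range_15 TYPE('a)"
    and dm: "d_matrix n \<Phi>" and dp: "det \<Phi> \<noteq> 0" and n: "0 < n"
  shows "GL n = set_prod3 (G_Phi n \<Phi>) (U_lw n) (U_up n)"
proof (intro equalityI subsetI)
  fix X :: "'a mat" assume "X \<in> set_prod3 (G_Phi n \<Phi>) (U_lw n) (U_up n)"
  then obtain x y z where X: "X = x * y * z" and x: "x \<in> G_Phi n \<Phi>" and y: "y \<in> U_lw n" and z: "z \<in> U_up n"
    unfolding set_prod3_def by blast
  have xG: "x \<in> GL n" using x unfolding G_Phi_def by auto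
  show "X \<in> GL n" unfolding X by (rule GL_mult[OF GL_mult[OF xG U_lw_GL[OF y]] U_up_GL[OF z]])
next
  fix A :: "'a mat" assume AG: "A \<in> GL n"
  then have A: "A \<in> carrier_mat n n" and du: "det A dvd 1" unfolding GL_iff by auto
  define c where "c = \<Phi>$$(n-1,n-1)"
  have "(\<Prod>i = 0..<n. \<Phi>$$(i,i)) \<noteq> 0" using dp d_matrix_det[OF dm] by simp
  then have c0: "c \<noteq> 0" unfolding c_def using n by (simp add: prod_zero_iff)
  obtain k where "1 = det A * k" using du by (auto elim: dvdE)
  then have "k * det A + 0 * c = 1" by (simp add: mult.commute)
  then have cA: "cop (det A) c" unfolding cop_def by blast
  from main_induct[OF bez sr c0 A cA] obtain U L where U: "U \<in> U_up n" and L: "L \<in> U_lw n"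
    and cu: "cupper c n (A * U * L)" by (elim bexE)
  have Uc: "U \<in> carrier_mat n n" using U unfolding U_up_def by auto
  have Lc: "L \<in> carrier_mat n n" using L unfolding U_lw_def by auto
  have HG: "A * U * L \<in> GL n" by (rule GL_mult[OF GL_mult[OF AG U_up_GL[OF U]] U_lw_GL[OF L]])
  have HP: "A * U * L \<in> G_Phi n \<Phi>" by (rule cupper_G_Phi[OF dm dp n HG cu[unfolded c_def]])
  obtain Ui where Uic: "Ui \<in> carrier_mat n n" and UUi: "U * Ui = 1\<^sub>m n" using GL_inv[OF U_up_GL[OF U]] by blast
  obtain Li where Lic: "Li \<in> carrier_mat n n" and LLi: "L * Li = 1\<^sub>m n" using GL_inv[OF U_lw_GL[OF L]] by blast
  have Ui: "Ui \<in> U_up n" by (rule U_up_inv[OF U Uic UUi])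
  have Li: "Li \<in> U_lw n" by (rule U_lw_inv[OF L Lic LLi])
  have AUc: "A * U \<in> carrier_mat n n" using A Uc by simp
  have "A * U * L * Li = A * U * (L * Li)" by (rule assoc_mult_mat[OF AUc Lc Lic])
  then have "A * U * L * Li * Ui = A * U * (L * Li) * Ui" by simp
  also have "\<dots> = A * (U * Ui)" using A Uc Uic unfolding LLi by simp
  also have "\<dots> = A" using A unfolding UUi by simp
  finally have eq: "A = (A * U * L) * Li * Ui" by simp
  have "\<exists>x y z. A = x * y * z \<and> x \<in> G_Phi n \<Phi> \<and> y \<in> U_lw n \<and> z \<in> U_up n"
    by (rule exI[of _ "A * U * L"], rule exI[of _ Li], rule exI[of _ Ui]) (simp only: HP Li Ui eq[symmetric] simp_thms)
  then show "A \<in> set_prod3 (G_Phi n \<Phi>) (U_lw n) (U_up n)"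
    unfolding set_prod3_def by simp
qed

lemma mult2_entry:
  assumes "X \<in> carrier_mat 2 2" "Y \<in> carrier_mat 2 2" "i < 2" "j < 2"
  shows "(X*Y)$$(i,j) = X$$(i,0) * Y$$(0,j) + X$$(i,1) * Y$$(1,j)"
proof -
  have "(X*Y)$$(i,j) = (\<Sum>l<2. X$$(i,l) * Y$$(l,j))" by (rule mult_entry[OF assms])
  also have "\<dots> = X$$(i,0) * Y$$(0,j) + X$$(i,1) * Y$$(1,j)" by (simp add: numeral_2_eq_2)
  finally show ?thesis .
qed

lemma two_imp_sr:
  fixes dummy :: "'a::idom"
  assumes bez: "bezout_domain TYPE('a)"
    and H2: "\<forall>\<Phi>::'a mat. d_matrix 2 \<Phi> \<and> det \<Phi> \<noteq> 0 \<longrightarrow> GL 2 = set_prod3 (G_Phi 2 \<Phi>) (U_lw 2) (U_up 2)"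
  shows "stable_range_15 TYPE('a)"
  unfolding stable_range_15_def
proof (intro allI impI)
  fix a b c :: 'a
  assume c0: "c \<noteq> 0" and g3: "gen_ideal {a, b, c} = UNIV"
  obtain x y z where xyz: "x*a + y*b + z*c = 1" using g3 unfolding three_iff by blast
  obtain d \<alpha> \<beta> a' b' where dab: "d = \<alpha>*a + \<beta>*b" and ad: "a = a'*d" and bd: "b = b'*d"
    using bezout_pair[OF bez, of a b] by blast
  have "\<exists>r. cop (a + b*r) c"
  proof (cases "d = 0")
    case True
    then have "a = 0" "b = 0" using ad bd by auto
    then have "0 * (a + b*0) + z * c = 1" using xyz by simp
    then have "cop (a + b*0) c" unfolding cop_def by blast
    then show ?thesis by blast
  next
    case False
    have "1 * d = (\<alpha>*a' + \<beta>*b') * d" using dab unfolding ad bd by (simp add: algebra_simps)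
    then have ab1: "\<alpha>*a' + \<beta>*b' = 1" using False by (simp only: mult_cancel_right) simp
    have "(x*a' + y*b') * d + z * c = 1" using xyz unfolding ad bd by (simp add: algebra_simps)
    then have cd: "cop d c" unfolding cop_def by blast
    define \<Phi> :: "'a mat" where "\<Phi> = mat 2 2 (\<lambda>(i,j). if i = j then (if i = 0 then 1 else c) else 0)"
    have Pc: "\<Phi> \<in> carrier_mat 2 2" unfolding \<Phi>_def by simp
    have dm: "d_matrix 2 \<Phi>" unfolding d_matrix_def \<Phi>_def by auto
    have "det \<Phi> = (\<Prod>i = 0..<2. \<Phi>$$(i,i))" by (rule d_matrix_det[OF dm])
    also have "\<dots> = c" unfolding \<Phi>_def by (simp add: numeral_2_eq_2)
    finally have dP: "det \<Phi> \<noteq> 0" using c0 by simp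
    have eqG: "GL 2 = set_prod3 (G_Phi 2 \<Phi>) (U_lw 2) (U_up 2)" using H2 dm dP by blast
    define A0 :: "'a mat" where "A0 = mat 2 2 (\<lambda>(i,j). if i = 0 then (if j = 0 then \<alpha> else - \<beta>) else (if j = 0 then b' else a'))"
    define B0 :: "'a mat" where "B0 = mat 2 2 (\<lambda>(i,j). if i = 0 then (if j = 0 then a' else \<beta>) else (if j = 0 then - b' else \<alpha>))"
    have A0c: "A0 \<in> carrier_mat 2 2" unfolding A0_def by simp
    have B0c: "B0 \<in> carrier_mat 2 2" unfolding B0_def by simp
    have AB: "A0 * B0 = 1\<^sub>m 2"
    proof (rule eq_matI)
      fix i j assume "i < dim_row (1\<^sub>m 2 :: 'a mat)" "j < dim_col (1\<^sub>m 2 :: 'a mat)"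
      then have i: "i < 2" and j: "j < 2" by auto
      show "(A0 * B0) $$ (i,j) = 1\<^sub>m 2 $$ (i,j)" unfolding mult2_entry[OF A0c B0c i j]
        using i j ab1 by (auto simp: A0_def B0_def less_2_cases_iff algebra_simps)
    qed (auto simp: A0_def B0_def)
    have BA: "B0 * A0 = 1\<^sub>m 2"
    proof (rule eq_matI)
      fix i j assume "i < dim_row (1\<^sub>m 2 :: 'a mat)" "j < dim_col (1\<^sub>m 2 :: 'a mat)"
      then have i: "i < 2" and j: "j < 2" by auto
      show "(B0 * A0) $$ (i,j) = 1\<^sub>m 2 $$ (i,j)" unfolding mult2_entry[OF B0c A0c i j]
        using i j ab1 by (auto simp: A0_def B0_def less_2_cases_iff algebra_simps)
    qed (auto simp: A0_def B0_def)
    have "A0 \<in> GL 2" unfolding GL_def invertible_mat_def inverts_mat_def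
      using A0c B0c AB BA by auto
    then have "A0 \<in> set_prod3 (G_Phi 2 \<Phi>) (U_lw 2) (U_up 2)" using eqG by simp
    then obtain H L U where A0eq: "A0 = H * L * U" and HP: "H \<in> G_Phi 2 \<Phi>" and L: "L \<in> U_lw 2" and U: "U \<in> U_up 2"
      unfolding set_prod3_def by blast
    obtain K where HG: "H \<in> GL 2" and HK: "H * \<Phi> = \<Phi> * K" and KG: "K \<in> GL 2"
      using HP unfolding G_Phi_def by blast
    have Hc: "H \<in> carrier_mat 2 2" using HG unfolding GL_def by auto
    have Kc: "K \<in> carrier_mat 2 2" using KG unfolding GL_def by auto
    have Lc: "L \<in> carrier_mat 2 2" using L unfolding U_lw_def by auto
    have Uc: "U \<in> carrier_mat 2 2" using U unfolding U_up_def by auto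
    have i1: "(1::nat) < 2" and i0: "(0::nat) < 2" by auto
    have "(H * \<Phi>) $$ (1,0) = (\<Phi> * K) $$ (1,0)" using HK by simp
    then have "H$$(1,0) = c * K$$(1,0)"
      unfolding mult2_entry[OF Hc Pc i1 i0] mult2_entry[OF Pc Kc i1 i0] by (simp add: \<Phi>_def)
    then have cH: "c dvd H$$(1,0)" by simp
    then obtain m where m: "H$$(1,0) = c * m" by (auto elim: dvdE)
    define l where "l = L$$(1,0)"
    define u where "u = U$$(0,1)"
    have Le: "L$$(0,0) = 1" "L$$(0,1) = 0" "L$$(1,1) = 1" using L unfolding U_lw_def by auto
    have Ue: "U$$(0,0) = 1" "U$$(1,0) = 0" "U$$(1,1) = 1" using U unfolding U_up_def by auto
    have HLc: "H * L \<in> carrier_mat 2 2" using Hc Lc by simp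
    have HL0: "(H*L)$$(1,0) = H$$(1,0) + H$$(1,1) * l"
      unfolding mult2_entry[OF Hc Lc i1 i0] l_def using Le by simp
    have HL1: "(H*L)$$(1,1) = H$$(1,1)"
      unfolding mult2_entry[OF Hc Lc i1 i1] using Le by simp
    have "A0 $$ (1,0) = (H*L*U)$$(1,0)" using A0eq by simp
    then have e1: "b' = H$$(1,0) + H$$(1,1) * l"
      unfolding mult2_entry[OF HLc Uc i1 i0] HL0 HL1 using Ue by (simp add: A0_def)
    have "A0 $$ (1,1) = (H*L*U)$$(1,1)" using A0eq by simp
    then have e2: "a' = (H$$(1,0) + H$$(1,1) * l) * u + H$$(1,1)"
      unfolding mult2_entry[OF HLc Uc i1 i1] HL0 HL1 u_def using Ue by (simp add: A0_def)
    define h where "h = H$$(1,1)"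
    have "a' + b' * (-u) = h" unfolding e2 e1 h_def by (simp add: algebra_simps)
    have "1 = \<alpha>*a' + \<beta>*b'" using ab1 by simp
    also have "\<dots> = h * (\<alpha>*l*u + \<alpha> + \<beta>*l) + (\<alpha>*m*u + \<beta>*m) * c"
      unfolding e2 e1 m h_def by (simp add: algebra_simps)
    finally have "(\<alpha>*l*u + \<alpha> + \<beta>*l) * h + (\<alpha>*m*u + \<beta>*m) * c = 1" by (simp add: mult.commute)
    then have ch: "cop h c" unfolding cop_def by blast
    have "a + b * (-u) = d * (a' + b' * (-u))" unfolding ad bd by (simp add: algebra_simps)
    also have "a' + b' * (-u) = h" unfolding e2 e1 h_def by (simp add: algebra_simps)
    finally have "a + b * (-u) = d * h" .
    then have "cop (a + b * (-u)) c" using cop_mult[OF cd ch] by simp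
    then show ?thesis by blast
  qed
  then show "\<exists>r. gen_ideal {a + b * r, c} = UNIV" unfolding cop_iff .
qed

theorem theorem2p14:
  assumes "bezout_domain TYPE('a::idom)"
  shows "(stable_range_15 TYPE('a) \<longleftrightarrow>
           (\<forall>\<Phi>::'a mat. d_matrix 2 \<Phi> \<and> det \<Phi> \<noteq> 0 \<longrightarrow>
              GL 2 = set_prod3 (G_Phi 2 \<Phi>) (U_lw 2) (U_up 2))) \<and>
         ((\<forall>\<Phi>::'a mat. d_matrix 2 \<Phi> \<and> det \<Phi> \<noteq> 0 \<longrightarrow>
              GL 2 = set_prod3 (G_Phi 2 \<Phi>) (U_lw 2) (U_up 2)) \<longleftrightarrow>
          (\<forall>n\<ge>2. \<forall>\<Phi>::'a mat. d_matrix n \<Phi> \<and> det \<Phi> \<noteq> 0 \<longrightarrow>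
              GL n = set_prod3 (G_Phi n \<Phi>) (U_lw n) (U_up n)))"
proof -
  have AC: "\<forall>n\<ge>2. \<forall>\<Phi>::'a mat. d_matrix n \<Phi> \<and> det \<Phi> \<noteq> 0 \<longrightarrow>
              GL n = set_prod3 (G_Phi n \<Phi>) (U_lw n) (U_up n)"
    if sr: "stable_range_15 TYPE('a)"
  proof (intro allI impI)
    fix n :: nat and \<Phi> :: "'a mat"
    assume n: "2 \<le> n" and h: "d_matrix n \<Phi> \<and> det \<Phi> \<noteq> 0"
    show "GL n = set_prod3 (G_Phi n \<Phi>) (U_lw n) (U_up n)"
      by (rule GL_decomp[OF assms sr]) (use n h in auto)
  qed
  have CB: "\<forall>\<Phi>::'a mat. d_matrix 2 \<Phi> \<and> det \<Phi> \<noteq> 0 \<longrightarrow>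
              GL 2 = set_prod3 (G_Phi 2 \<Phi>) (U_lw 2) (U_up 2)"
    if C: "\<forall>n\<ge>2. \<forall>\<Phi>::'a mat. d_matrix n \<Phi> \<and> det \<Phi> \<noteq> 0 \<longrightarrow>
              GL n = set_prod3 (G_Phi n \<Phi>) (U_lw n) (U_up n)"
    using C by simp
  have BA: "stable_range_15 TYPE('a)"
    if B: "\<forall>\<Phi>::'a mat. d_matrix 2 \<Phi> \<and> det \<Phi> \<noteq> 0 \<longrightarrow>
              GL 2 = set_prod3 (G_Phi 2 \<Phi>) (U_lw 2) (U_up 2)"
    by (rule two_imp_sr[OF assms B])
  show ?thesis using AC CB BA by blast
qed

end
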